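(* Let $X$ be a finite 2-covered graph of spaces. Then $\chi(\Gamma(X))\le\chi(\Gamma_U(X))$.
   Context: A 2-covered graph of spaces $X$ consists of: a finite connected graph $\Gamma_U(X)$ (the underlying graph), with oriented edges $e$, reversal $\bar e$, and terminal/initial vertices $\tau(e),\iota(e)=\tau(\bar e)$; for each vertex $v$ a finite connected graph $V$ (vertex space); for each edge $e$ a finite connected graph $E=\bar E$ (edge space, possibly a single point); and for each oriented edge $e$ a combinatorial immersion (locally injective graph map) $\tau_e\colon E\looparrowright V$ where $v=\tau(e)$; subject to the 2-covering condition: for each vertex $v$, every edge of $V$ is the image of exactly two edges of $\bigsqcup_{\tau(e)=v}E$. The horizontal subgraph $\Gamma(X)$ is the graph whose vertices are the vertices of all vertex spaces and with one edge for each edge $e$ of $\Gamma_U(X)$ and each vertex $x$ of $E$, joining $\tau_{\bar e}(x)$ to $\tau_e(x)$. $\chi$ denotes Euler characteristic. *)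

theory Defs
  imports Main
begin

text \<open>Graphs in the sense of Serre: a set of vertices, a set of oriented edges,
  an initial-vertex map and a fixed-point-free involution (edge reversal).
  Loops and multiple edges are allowed.\<close>

record ('v, 'e) sgraph =
  verts :: "'v set"
  arcs  :: "'e set"
  init  :: "'e \<Rightarrow> 'v"
  rev   :: "'e \<Rightarrow> 'e"

definition tgt :: "('v, 'e) sgraph \<Rightarrow> 'e \<Rightarrow> 'v" where
  "tgt G a = init G (rev G a)"

definition fin_graph :: "('v, 'e) sgraph \<Rightarrow> bool" where
  "fin_graph G \<longleftrightarrow> finite (verts G) \<and> finite (arcs G) \<and>
     (\<forall>a\<in>arcs G. init G a \<in> verts G \<and> rev G a \<in> arcs G \<and>
                 rev G a \<noteq> a \<and> rev G (rev G a) = a)"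

definition adj_rel :: "('v, 'e) sgraph \<Rightarrow> ('v \<times> 'v) set" where
  "adj_rel G = {(init G a, tgt G a) | a. a \<in> arcs G}"

definition connected_graph :: "('v, 'e) sgraph \<Rightarrow> bool" where
  "connected_graph G \<longleftrightarrow> verts G \<noteq> {} \<and>
     (\<forall>x\<in>verts G. \<forall>y\<in>verts G. (x, y) \<in> (adj_rel G)\<^sup>*)"

definition unoriented_edges :: "('v, 'e) sgraph \<Rightarrow> 'e set set" where
  "unoriented_edges G = {{a, rev G a} | a. a \<in> arcs G}"

definition euler_char :: "('v, 'e) sgraph \<Rightarrow> int" where
  "euler_char G = int (card (verts G)) - int (card (unoriented_edges G))"

definition graph_map :: "('a, 'b) sgraph \<Rightarrow> ('c, 'd) sgraph \<Rightarrow>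
    ('a \<Rightarrow> 'c) \<Rightarrow> ('b \<Rightarrow> 'd) \<Rightarrow> bool" where
  "graph_map G H fv fe \<longleftrightarrow>
     (\<forall>x\<in>verts G. fv x \<in> verts H) \<and>
     (\<forall>a\<in>arcs G. fe a \<in> arcs H \<and> fv (init G a) = init H (fe a) \<and>
                 fe (rev G a) = rev H (fe a))"

definition immersion :: "('a, 'b) sgraph \<Rightarrow> ('c, 'd) sgraph \<Rightarrow>
    ('a \<Rightarrow> 'c) \<Rightarrow> ('b \<Rightarrow> 'd) \<Rightarrow> bool" where
  "immersion G H fv fe \<longleftrightarrow> graph_map G H fv fe \<and>
     (\<forall>x\<in>verts G. inj_on fe {a \<in> arcs G. init G a = x})"

text \<open>A finite 2-covered graph of spaces: underlying graph U, vertex spaces Vs v,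
  edge spaces Es e (with Es (rev e) = Es e), and for each oriented edge e an
  immersion (tv e, te e) : Es e \<rightarrow> Vs (tgt U e).\<close>
definition two_covered_gos ::
  "('v, 'e) sgraph \<Rightarrow> ('v \<Rightarrow> ('a, 'b) sgraph) \<Rightarrow> ('e \<Rightarrow> ('c, 'd) sgraph) \<Rightarrow>
   ('e \<Rightarrow> 'c \<Rightarrow> 'a) \<Rightarrow> ('e \<Rightarrow> 'd \<Rightarrow> 'b) \<Rightarrow> bool" where
  "two_covered_gos U Vs Es tv te \<longleftrightarrow>
     fin_graph U \<and> connected_graph U \<and>
     (\<forall>v\<in>verts U. fin_graph (Vs v) \<and> connected_graph (Vs v)) \<and>
     (\<forall>e\<in>arcs U. fin_graph (Es e) \<and> connected_graph (Es e) \<and>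
                 Es (rev U e) = Es e \<and>
                 immersion (Es e) (Vs (tgt U e)) (tv e) (te e)) \<and>
     (\<forall>v\<in>verts U. \<forall>b\<in>arcs (Vs v).
        card {(e, d). e \<in> arcs U \<and> tgt U e = v \<and> d \<in> arcs (Es e) \<and> te e d = b} = 2)"

definition horizontal ::
  "('v, 'e) sgraph \<Rightarrow> ('v \<Rightarrow> ('a, 'b) sgraph) \<Rightarrow> ('e \<Rightarrow> ('c, 'd) sgraph) \<Rightarrow>
   ('e \<Rightarrow> 'c \<Rightarrow> 'a) \<Rightarrow> ('v \<times> 'a, 'e \<times> 'c) sgraph" where
  "horizontal U Vs Es tv =
     \<lparr> verts = Sigma (verts U) (\<lambda>v. verts (Vs v)),
       arcs = Sigma (arcs U) (\<lambda>e. verts (Es e)),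
       init = (\<lambda>(e, x). (init U e, tv (rev U e) x)),
       rev = (\<lambda>(e, x). (rev U e, x)) \<rparr>"

end

theory Submission
  imports Defs
begin

lemma unor_card:
  assumes fin: "finite (arcs G)"
    and inv: "\<forall>a\<in>arcs G. rev G a \<in> arcs G \<and> rev G a \<noteq> a \<and> rev G (rev G a) = a"
  shows "2 * card (unoriented_edges G) = card (arcs G)"
proof -
  let ?C = "unoriented_edges G"
  have C: "?C = (\<lambda>a. {a, rev G a}) ` arcs G"
    unfolding unoriented_edges_def by auto
  have U: "\<Union>?C = arcs G" using inv unfolding C by auto
  have f1: "finite ?C" unfolding C using fin by simp
  have f2: "finite (\<Union>?C)" using U fin by simp
  have f3: "\<And>c. c \<in> ?C \<Longrightarrow> card c = 2" unfolding C using inv by auto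
  have f4: "\<And>c1 c2. c1 \<in> ?C \<Longrightarrow> c2 \<in> ?C \<Longrightarrow> c1 \<noteq> c2 \<Longrightarrow> c1 \<inter> c2 = {}"
    unfolding C using inv by auto metis+
  have "2 * card ?C = card (\<Union>?C)" by (rule card_partition[OF f1 f2 f3 f4])
  then show ?thesis using U by simp
qed

lemma local_count:
  fixes V :: "('a,'b) sgraph" and I :: "'e set" and Es :: "'e \<Rightarrow> ('c,'d) sgraph"
  assumes fV: "fin_graph V" and cV: "connected_graph V" and fI: "finite I"
    and hE: "\<forall>e\<in>I. fin_graph (Es e) \<and> verts (Es e) \<noteq> {} \<and> immersion (Es e) V (tv e) (te e)"
    and cov: "\<forall>b\<in>arcs V. card {(e,d). e \<in> I \<and> d \<in> arcs (Es e) \<and> te e d = b} = 2"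
  shows "2 * card (verts V) + card I \<le> 2 + (\<Sum>e\<in>I. card (verts (Es e)))"
proof -
  obtain r where r: "r \<in> verts V" using cV unfolding connected_graph_def by auto
  define R where "R = adj_rel V"
  define dep where "dep x = (LEAST n. (x, r) \<in> R ^^ n)" for x
  have step: "\<exists>a. a \<in> arcs V \<and> init V a = x \<and> dep (tgt V a) < dep x"
    if x: "x \<in> verts V - {r}" for x
  proof -
    have "(x, r) \<in> R\<^sup>*" using cV x r unfolding connected_graph_def R_def by auto
    then obtain n where "(x, r) \<in> R ^^ n" using rtrancl_power by blast
    then have xr: "(x, r) \<in> R ^^ dep x" unfolding dep_def by (rule LeastI)
    have "dep x \<noteq> 0"
    proof
      assume "dep x = 0"
      with xr have "(x, r) \<in> Id" by simp
      with x show False by simp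
    qed
    then obtain m where m: "dep x = Suc m" using not0_implies_Suc by blast
    then obtain y where y: "(x, y) \<in> R" "(y, r) \<in> R ^^ m" using xr relpow_Suc_D2 by metis
    have "dep y \<le> m" unfolding dep_def using y(2) by (rule Least_le)
    moreover obtain a where "a \<in> arcs V" "init V a = x" "tgt V a = y"
      using y(1) unfolding R_def adj_rel_def by auto
    ultimately show ?thesis using m by auto
  qed
  obtain t where t: "\<forall>x\<in>verts V - {r}. t x \<in> arcs V \<and> init V (t x) = x \<and> dep (tgt V (t x)) < dep x"
    using step by metis
  define Tup where "Tup = t ` (verts V - {r})"
  have finV: "finite (verts V)" using fV unfolding fin_graph_def by auto
  have injt: "inj_on t (verts V - {r})"
    by (rule inj_onI) (metis t)
  have cT: "card Tup = card (verts V) - 1"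
    unfolding Tup_def using card_image[OF injt] r finV by simp
  have finT: "finite Tup" unfolding Tup_def using finV by simp
  have TupV: "Tup \<subseteq> arcs V" unfolding Tup_def using t by auto
  define S where "S b = {(e,d). e \<in> I \<and> d \<in> arcs (Es e) \<and> te e d = b}" for b
  define P where "P = {(e,d). e \<in> I \<and> d \<in> arcs (Es e) \<and> te e d \<in> Tup}"
  have finSig: "finite (Sigma I (\<lambda>e. arcs (Es e)))"
    using fI hE unfolding fin_graph_def by auto
  have PU: "P = (\<Union>b\<in>Tup. S b)" unfolding P_def S_def by auto
  have "card P = (\<Sum>b\<in>Tup. card (S b))"
    unfolding PU
  proof (rule card_UN_disjoint[OF finT])
    show "\<forall>i\<in>Tup. finite (S i)"
      using finSig by (auto simp: S_def intro: finite_subset[OF _ finSig])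
    show "\<forall>i\<in>Tup. \<forall>j\<in>Tup. i \<noteq> j \<longrightarrow> S i \<inter> S j = {}" unfolding S_def by auto
  qed
  also have "\<dots> = (\<Sum>b\<in>Tup. 2)" using cov TupV unfolding S_def by (intro sum.cong) auto
  finally have cP: "card P = 2 * card Tup" by simp
  have "\<exists>y. y \<in> verts (Es e) \<and> (\<forall>z. z \<in> verts (Es e) \<longrightarrow> dep (tv e y) \<le> dep (tv e z))"
    if eI: "e \<in> I" for e
  proof -
    obtain z where "z \<in> verts (Es e)" using hE eI by auto
    then show ?thesis using ex_has_least_nat[where P="\<lambda>z. z \<in> verts (Es e)" and m="\<lambda>z. dep (tv e z)"]
      by blast
  qed
  then obtain ym where ym: "\<forall>e\<in>I. ym e \<in> verts (Es e) \<and> (\<forall>z. z \<in> verts (Es e) \<longrightarrow> dep (tv e (ym e)) \<le> dep (tv e z))"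
    by metis
  define Q where "Q = Sigma I (\<lambda>e. verts (Es e) - {ym e})"
  define g where "g = (\<lambda>(e, d). (e, init (Es e) d))"
  have gm: "graph_map (Es e) V (tv e) (te e)" "\<forall>x\<in>verts (Es e). inj_on (te e) {a \<in> arcs (Es e). init (Es e) a = x}"
    "fin_graph (Es e)" if "e \<in> I" for e
    using hE that unfolding immersion_def by auto
  have inj: "inj_on g P"
  proof (rule inj_onI)
    fix p q assume p: "p \<in> P" and q: "q \<in> P" and gpq: "g p = g q"
    obtain e d where pe: "p = (e, d)" by (cases p)
    obtain e' d' where qe: "q = (e', d')" by (cases q)
    have ee: "e' = e" and ii: "init (Es e) d' = init (Es e) d" using gpq pe qe unfolding g_def by auto
    have e: "e \<in> I" and d: "d \<in> arcs (Es e)" "d' \<in> arcs (Es e)"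
      and td: "te e d \<in> Tup" "te e d' \<in> Tup" using p q pe qe ee unfolding P_def by auto
    obtain x where x: "x \<in> verts V - {r}" "te e d = t x" using td unfolding Tup_def by auto
    obtain x' where x': "x' \<in> verts V - {r}" "te e d' = t x'" using td unfolding Tup_def by auto
    have "x = tv e (init (Es e) d)" using x t gm(1)[OF e] d unfolding graph_map_def by metis
    moreover have "x' = tv e (init (Es e) d')" using x' t gm(1)[OF e] d unfolding graph_map_def by metis
    ultimately have "te e d = te e d'" using ii x x' by simp
    moreover have "init (Es e) d \<in> verts (Es e)" using gm(3)[OF e] d unfolding fin_graph_def by auto
    ultimately have "d = d'" using gm(2)[OF e] d ii by (auto dest: inj_onD)
    then show "p = q" using pe qe ee by simp
  qed
  have gPQ: "g ` P \<subseteq> Q"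
  proof
    fix z assume "z \<in> g ` P"
    then obtain e d where e: "e \<in> I" and d: "d \<in> arcs (Es e)" and td: "te e d \<in> Tup"
      and z: "z = (e, init (Es e) d)" unfolding P_def g_def by auto
    obtain x where x: "x \<in> verts V - {r}" "te e d = t x" using td unfolding Tup_def by auto
    have fE: "fin_graph (Es e)" using gm(3)[OF e] .
    have iv: "init (Es e) d \<in> verts (Es e)" using fE d unfolding fin_graph_def by auto
    have rd: "rev (Es e) d \<in> arcs (Es e)" using fE d unfolding fin_graph_def by auto
    have irv: "init (Es e) (rev (Es e) d) \<in> verts (Es e)" using fE rd unfolding fin_graph_def by auto
    have xi: "tv e (init (Es e) d) = x" using x t gm(1)[OF e] d unfolding graph_map_def by metis
    have "tv e (init (Es e) (rev (Es e) d)) = init V (te e (rev (Es e) d))"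
      using gm(1)[OF e] rd unfolding graph_map_def by auto
    also have "\<dots> = init V (rev V (te e d))" using gm(1)[OF e] d unfolding graph_map_def by auto
    also have "\<dots> = tgt V (t x)" using x unfolding tgt_def by simp
    finally have "dep (tv e (init (Es e) (rev (Es e) d))) < dep x" using t x by simp
    then have "init (Es e) d \<noteq> ym e" using ym e irv xi by force
    then show "z \<in> Q" using z e iv unfolding Q_def by auto
  qed
  have finQ: "finite Q" unfolding Q_def using fI hE unfolding fin_graph_def by auto
  have "card P \<le> card Q" using card_inj_on_le[OF inj gPQ finQ] .
  also have "card Q = (\<Sum>e\<in>I. card (verts (Es e)) - 1)"
    unfolding Q_def using fI hE ym unfolding fin_graph_def by (simp add: card_SigmaI)
  finally have ineq: "2 * (card (verts V) - 1) \<le> (\<Sum>e\<in>I. card (verts (Es e)) - 1)"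
    using cP cT by simp
  have "(\<Sum>e\<in>I. card (verts (Es e)) - 1) + card I = (\<Sum>e\<in>I. card (verts (Es e)))"
  proof -
    have "(\<Sum>e\<in>I. card (verts (Es e)) - 1) + card I = (\<Sum>e\<in>I. card (verts (Es e)) - 1 + 1)"
      using sum.distrib[of "\<lambda>e. card (verts (Es e)) - 1" "\<lambda>e. 1" I] by simp
    also have "\<dots> = (\<Sum>e\<in>I. card (verts (Es e)))"
    proof (rule sum.cong)
      fix e assume e: "e \<in> I"
      have "card (verts (Es e)) \<noteq> 0" using hE e unfolding fin_graph_def by auto
      then show "card (verts (Es e)) - 1 + 1 = card (verts (Es e))" by simp
    qed simp
    finally show ?thesis .
  qed
  moreover have "card (verts V) \<ge> 1" using r finV by (metis One_nat_def Suc_leI card_gt_0_iff empty_iff)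
  ultimately show ?thesis using ineq by linarith
qed

theorem lemma4p2:
  assumes "two_covered_gos U Vs Es tv te"
  shows "euler_char (horizontal U Vs Es tv) \<le> euler_char U"
proof -
  let ?H = "horizontal U Vs Es tv"
  define In where "In v = {e \<in> arcs U. tgt U e = v}" for v
  have fU: "fin_graph U" and cU: "connected_graph U"
    and hV: "\<forall>v\<in>verts U. fin_graph (Vs v) \<and> connected_graph (Vs v)"
    and hE: "\<forall>e\<in>arcs U. fin_graph (Es e) \<and> connected_graph (Es e) \<and> Es (rev U e) = Es e \<and>
                 immersion (Es e) (Vs (tgt U e)) (tv e) (te e)"
    and cov: "\<forall>v\<in>verts U. \<forall>b\<in>arcs (Vs v).
        card {(e, d). e \<in> arcs U \<and> tgt U e = v \<and> d \<in> arcs (Es e) \<and> te e d = b} = 2"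
    using assms unfolding two_covered_gos_def by auto
  have finVU: "finite (verts U)" and finAU: "finite (arcs U)"
    and invU: "\<forall>a\<in>arcs U. rev U a \<in> arcs U \<and> rev U a \<noteq> a \<and> rev U (rev U a) = a"
    and initU: "\<forall>a\<in>arcs U. init U a \<in> verts U"
    using fU unfolding fin_graph_def by auto
  have tgtU: "tgt U e \<in> verts U" if "e \<in> arcs U" for e
    using invU initU that unfolding tgt_def by auto
  have aH: "arcs ?H = Sigma (arcs U) (\<lambda>e. verts (Es e))"
    and vH: "verts ?H = Sigma (verts U) (\<lambda>v. verts (Vs v))"
    and rH: "rev ?H = (\<lambda>(e, x). (rev U e, x))" unfolding horizontal_def by simp_all
  have finEs: "finite (verts (Es e))" if "e \<in> arcs U" for e
    using hE that unfolding fin_graph_def by auto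
  have finVs: "finite (verts (Vs v))" if "v \<in> verts U" for v
    using hV that unfolding fin_graph_def by auto
  have uH: "2 * card (unoriented_edges ?H) = card (arcs ?H)"
  proof (rule unor_card)
    show "finite (arcs ?H)" unfolding aH using finAU finEs by auto
    show "\<forall>a\<in>arcs ?H. rev ?H a \<in> arcs ?H \<and> rev ?H a \<noteq> a \<and> rev ?H (rev ?H a) = a"
      unfolding aH rH using invU hE by auto
  qed
  have uU: "2 * card (unoriented_edges U) = card (arcs U)" using unor_card finAU invU by blast
  have cAH: "card (arcs ?H) = (\<Sum>v\<in>verts U. \<Sum>e\<in>In v. card (verts (Es e)))"
  proof -
    have "card (arcs ?H) = (\<Sum>e\<in>arcs U. card (verts (Es e)))"
      unfolding aH using finAU finEs by (simp add: card_SigmaI)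
    also have "\<dots> = (\<Sum>v\<in>verts U. \<Sum>e\<in>In v. card (verts (Es e)))"
      unfolding In_def using sum.group[OF finAU finVU, of "tgt U" "\<lambda>e. card (verts (Es e))"] tgtU
      by (simp add: image_subset_iff)
    finally show ?thesis .
  qed
  have cAU: "card (arcs U) = (\<Sum>v\<in>verts U. card (In v))"
  proof -
    have g: "(\<Sum>v\<in>verts U. \<Sum>e\<in>In v. (1::nat)) = (\<Sum>e\<in>arcs U. 1)"
      using sum.group[OF finAU finVU, of "tgt U" "\<lambda>e. (1::nat)"] tgtU
      unfolding In_def by (auto simp only: image_subset_iff)
    have a: "card (arcs U) = (\<Sum>e\<in>arcs U. (1::nat))" by simp
    have b: "(\<Sum>v\<in>verts U. card (In v)) = (\<Sum>v\<in>verts U. \<Sum>e\<in>In v. (1::nat))" by simp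
    show ?thesis using a b g by simp
  qed
  have cVH: "card (verts ?H) = (\<Sum>v\<in>verts U. card (verts (Vs v)))"
    unfolding vH using finVU finVs by (simp add: card_SigmaI)
  have loc: "2 * card (verts (Vs v)) + card (In v) \<le> 2 + (\<Sum>e\<in>In v. card (verts (Es e)))"
    if v: "v \<in> verts U" for v
  proof (rule local_count[where te = te])
    show "fin_graph (Vs v)" "connected_graph (Vs v)" using hV v by auto
    show "finite (In v)" unfolding In_def using finAU by auto
    show "\<forall>e\<in>In v. fin_graph (Es e) \<and> verts (Es e) \<noteq> {} \<and> immersion (Es e) (Vs v) (tv e) (te e)"
      using hE unfolding In_def connected_graph_def by auto
    show "\<forall>b\<in>arcs (Vs v). card {(e, d). e \<in> In v \<and> d \<in> arcs (Es e) \<and> te e d = b} = 2"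
      using cov v unfolding In_def by (auto simp: conj_assoc)
  qed
  have "(\<Sum>v\<in>verts U. 2 * card (verts (Vs v)) + card (In v))
        \<le> (\<Sum>v\<in>verts U. 2 + (\<Sum>e\<in>In v. card (verts (Es e))))"
    using loc by (rule sum_mono)
  then have "2 * card (verts ?H) + card (arcs U) \<le> 2 * card (verts U) + card (arcs ?H)"
    unfolding cVH cAU cAH sum.distrib sum_distrib_left[symmetric] by simp
  then show ?thesis unfolding euler_char_def using uH uU by linarith
qed

end
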